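(* For every rule of G3lp with premises $S_1,\dots,S_k$ ($k\ge 0$) and conclusion $S$: if each forgetful projection $S_i^\circ$ is derivable in G3s + $(\Box\mathrm{Cut})$, then $S^\circ$ is derivable in G3s + $(\Box\mathrm{Cut})$. That is, the forgetful projection of every G3lp rule is admissible in G3s + $(\Box\mathrm{Cut})$.
   Context: S4 formulas: $A ::= \bot \mid P \mid A_0\to A_1 \mid \Box A$ ($P$ atomic). LP terms: $t ::= c \mid x \mid t_0\cdot t_1 \mid t_0+t_1 \mid\ !t$ ($c$ constants, $x$ variables); LP formulas: $A ::= \bot \mid P \mid A_0\to A_1 \mid t{:}A$. Axioms of LP: A0 a finite set of axiom schemes of classical propositional logic; A1 $t{:}F\to F$; A2 $s{:}(F\to G)\to(t{:}F\to (s\cdot t){:}G)$; A3 $t{:}F\to\ !t{:}(t{:}F)$; A4 $s{:}F\to(s+t){:}F$ and $t{:}F\to(s+t){:}F$. Forgetful projection: $\bot^\circ=\bot$, $P^\circ=P$, $(A\to B)^\circ=A^\circ\to B^\circ$, $(t{:}A)^\circ=\Box A^\circ$, extended to multisets and sequents componentwise. Sequents $\Gamma\supset\Delta$ use finite multisets; $\Box\Gamma:=\{\Box B\mid B\in\Gamma\}$. G3s rules: (Ax) $P,\Gamma\supset\Delta,P$ ($P$ atomic); $(\bot\supset)$ $\bot,\Gamma\supset\Delta$; $(\to\supset)$ from $\Gamma\supset\Delta,A$ and $B,\Gamma\supset\Delta$ infer $A\to B,\Gamma\supset\Delta$; $(\supset\to)$ from $A,\Gamma\supset\Delta,B$ infer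 $\Gamma\supset\Delta,A\to B$; $(\Box\supset)$ from $A,\Box A,\Gamma\supset\Delta$ infer $\Box A,\Gamma\supset\Delta$; $(\supset\Box)$ from $\Box\Gamma\supset A$ infer $\Gamma',\Box\Gamma\supset\Delta',\Box A$. The rule $(\Box\mathrm{Cut})$: from $\Gamma\supset\Delta,\Box A,\Box B$ and $\Gamma\supset\Delta,\Box(A\to B),\Box B$ infer $\Gamma\supset\Delta,\Box B$. G3lp has the rules (Ax), $(\bot\supset)$, $(\to\supset)$, $(\supset\to)$ (for LP formulas) and: $(\supset{:})_c$ from $\supset A$ infer $\Gamma\supset\Delta,c{:}A$, where $A$ is an axiom A0–A4 and $c$ a constant; $(\supset{:})_t$ from $t{:}A\supset A$ infer $t{:}A,\Gamma\supset\Delta,t{:}A$; $({:}\supset)$ from $A,t{:}A,\Gamma\supset\Delta$ infer $t{:}A,\Gamma\supset\Delta$; $(\supset !)$ from $\Gamma\supset\Delta,t{:}A,\,!t{:}t{:}A$ infer $\Gamma\supset\Delta,\,!t{:}t{:}A$; $(\supset +)$ from $\Gamma\supset\Delta,s{:}A,t{:}A,(s+t){:}A$ infer $\Gamma\supset\Delta,(s+t){:}A$; $(\supset\cdot)$ from $\Gamma\supset\Delta,s{:}(A\to B),(s\cdot t){:}B$ and $\Gamma\supset\Delta,t{:}A,(s\cdot t){:}B$ infer $\Gamma\supset\Delta,(s\cdot t){:}B$. *)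

theory Defs
  imports Main "HOL-Library.Multiset"
begin

datatype 'p fm = Bot | Atom 'p | Imp "'p fm" "'p fm" | Box "'p fm"

datatype ('c, 'v) tm = Const 'c | Var 'v | App "('c, 'v) tm" "('c, 'v) tm"
  | Plus "('c, 'v) tm" "('c, 'v) tm" | Bang "('c, 'v) tm"

datatype ('p, 'c, 'v) lfm = LBot | LAtom 'p | LImp "('p, 'c, 'v) lfm" "('p, 'c, 'v) lfm"
  | Just "('c, 'v) tm" "('p, 'c, 'v) lfm"

type_synonym 'f seq = "'f multiset \<times> 'f multiset"

inductive lp_A0 :: "('p, 'c, 'v) lfm \<Rightarrow> bool" where
  K: "lp_A0 (LImp A (LImp B A))"
| S: "lp_A0 (LImp (LImp A (LImp B C)) (LImp (LImp A B) (LImp A C)))"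
| DN: "lp_A0 (LImp (LImp (LImp A LBot) LBot) A)"

inductive lp_axiom :: "('p, 'c, 'v) lfm \<Rightarrow> bool" where
  A0: "lp_A0 A \<Longrightarrow> lp_axiom A"
| A1: "lp_axiom (LImp (Just t F) F)"
| A2: "lp_axiom (LImp (Just s (LImp F G)) (LImp (Just t F) (Just (App s t) G)))"
| A3: "lp_axiom (LImp (Just t F) (Just (Bang t) (Just t F)))"
| A4a: "lp_axiom (LImp (Just s F) (Just (Plus s t) F))"
| A4b: "lp_axiom (LImp (Just t F) (Just (Plus s t) F))"

fun forget :: "('p, 'c, 'v) lfm \<Rightarrow> 'p fm" where
  "forget LBot = Bot"
| "forget (LAtom P) = Atom P"
| "forget (LImp A B) = Imp (forget A) (forget B)"
| "forget (Just t A) = Box (forget A)"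

definition forget_seq :: "('p, 'c, 'v) lfm seq \<Rightarrow> 'p fm seq" where
  "forget_seq S = (image_mset forget (fst S), image_mset forget (snd S))"

inductive g3s_boxcut :: "'p fm multiset \<Rightarrow> 'p fm multiset \<Rightarrow> bool" where
  Ax: "g3s_boxcut (add_mset (Atom P) \<Gamma>) (add_mset (Atom P) \<Delta>)"
| BotL: "g3s_boxcut (add_mset Bot \<Gamma>) \<Delta>"
| ImpL: "g3s_boxcut \<Gamma> (add_mset A \<Delta>) \<Longrightarrow> g3s_boxcut (add_mset B \<Gamma>) \<Delta>
          \<Longrightarrow> g3s_boxcut (add_mset (Imp A B) \<Gamma>) \<Delta>"
| ImpR: "g3s_boxcut (add_mset A \<Gamma>) (add_mset B \<Delta>) \<Longrightarrow> g3s_boxcut \<Gamma> (add_mset (Imp A B) \<Delta>)"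
| BoxL: "g3s_boxcut (add_mset A (add_mset (Box A) \<Gamma>)) \<Delta> \<Longrightarrow> g3s_boxcut (add_mset (Box A) \<Gamma>) \<Delta>"
| BoxR: "g3s_boxcut (image_mset Box \<Gamma>) {#A#}
          \<Longrightarrow> g3s_boxcut (\<Gamma>' + image_mset Box \<Gamma>) (add_mset (Box A) \<Delta>')"
| BoxCut: "g3s_boxcut \<Gamma> (\<Delta> + {#Box A, Box B#})
          \<Longrightarrow> g3s_boxcut \<Gamma> (\<Delta> + {#Box (Imp A B), Box B#})
          \<Longrightarrow> g3s_boxcut \<Gamma> (add_mset (Box B) \<Delta>)"

definition g3s_derivable :: "'p fm seq \<Rightarrow> bool" where
  "g3s_derivable S = g3s_boxcut (fst S) (snd S)"

inductive g3lp_rule :: "('p, 'c, 'v) lfm seq list \<Rightarrow> ('p, 'c, 'v) lfm seq \<Rightarrow> bool" where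
  Ax: "g3lp_rule [] (add_mset (LAtom P) \<Gamma>, add_mset (LAtom P) \<Delta>)"
| BotL: "g3lp_rule [] (add_mset LBot \<Gamma>, \<Delta>)"
| ImpL: "g3lp_rule [(\<Gamma>, add_mset A \<Delta>), (add_mset B \<Gamma>, \<Delta>)] (add_mset (LImp A B) \<Gamma>, \<Delta>)"
| ImpR: "g3lp_rule [(add_mset A \<Gamma>, add_mset B \<Delta>)] (\<Gamma>, add_mset (LImp A B) \<Delta>)"
| JustR_c: "lp_axiom A \<Longrightarrow> g3lp_rule [({#}, {#A#})] (\<Gamma>, add_mset (Just (Const c) A) \<Delta>)"
| JustR_t: "g3lp_rule [({#Just t A#}, {#A#})] (add_mset (Just t A) \<Gamma>, add_mset (Just t A) \<Delta>)"
| JustL: "g3lp_rule [(add_mset A (add_mset (Just t A) \<Gamma>), \<Delta>)] (add_mset (Just t A) \<Gamma>, \<Delta>)"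
| BangR: "g3lp_rule [(\<Gamma>, \<Delta> + {#Just t A, Just (Bang t) (Just t A)#})]
             (\<Gamma>, add_mset (Just (Bang t) (Just t A)) \<Delta>)"
| PlusR: "g3lp_rule [(\<Gamma>, \<Delta> + {#Just s A, Just t A, Just (Plus s t) A#})]
             (\<Gamma>, add_mset (Just (Plus s t) A) \<Delta>)"
| AppR: "g3lp_rule [(\<Gamma>, \<Delta> + {#Just s (LImp A B), Just (App s t) B#}),
                    (\<Gamma>, \<Delta> + {#Just t A, Just (App s t) B#})]
             (\<Gamma>, add_mset (Just (App s t) B) \<Delta>)"

end

theory Submission
  imports Defs
begin

lemma g3_id: "g3s_boxcut (add_mset C \<Gamma>) (add_mset C \<Delta>)"
proof (induction C arbitrary: \<Gamma> \<Delta>)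
  case Bot
  then show ?case by (rule g3s_boxcut.BotL)
next
  case (Atom x)
  then show ?case by (rule g3s_boxcut.Ax)
next
  case (Imp A B)
  have 1: "g3s_boxcut (add_mset A \<Gamma>) (add_mset A (add_mset B \<Delta>))" by (rule Imp.IH(1))
  have 2: "g3s_boxcut (add_mset B (add_mset A \<Gamma>)) (add_mset B \<Delta>)" by (rule Imp.IH(2))
  have "g3s_boxcut (add_mset (Imp A B) (add_mset A \<Gamma>)) (add_mset B \<Delta>)"
    by (rule g3s_boxcut.ImpL) (use 1 2 in simp_all)
  then have "g3s_boxcut (add_mset A (add_mset (Imp A B) \<Gamma>)) (add_mset B \<Delta>)"
    by (simp add: add_mset_commute)
  then show ?case by (rule g3s_boxcut.ImpR)
next
  case (Box A)
  have "g3s_boxcut (add_mset A (add_mset (Box A) {#})) {#A#}" by (rule Box.IH)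
  then have "g3s_boxcut (add_mset (Box A) {#}) {#A#}" by (rule g3s_boxcut.BoxL)
  then have "g3s_boxcut (image_mset Box {#A#}) {#A#}" by simp
  then have "g3s_boxcut (\<Gamma> + image_mset Box {#A#}) (add_mset (Box A) \<Delta>)"
    by (rule g3s_boxcut.BoxR)
  then show ?case by simp
qed

lemma wkR: "g3s_boxcut \<Gamma> \<Delta> \<Longrightarrow> g3s_boxcut \<Gamma> (\<Delta> + \<Theta>)"
proof (induction rule: g3s_boxcut.induct)
  case (Ax P \<Gamma> \<Delta>)
  then show ?case by (simp add: g3s_boxcut.Ax)
next
  case (BotL \<Gamma> \<Delta>)
  then show ?case by (simp add: g3s_boxcut.BotL)
next
  case (ImpL \<Gamma> A \<Delta> B)
  then show ?case by (simp add: g3s_boxcut.ImpL)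
next
  case (ImpR A \<Gamma> B \<Delta>)
  then show ?case by (simp add: g3s_boxcut.ImpR)
next
  case (BoxL A \<Gamma> \<Delta>)
  then show ?case by (simp add: g3s_boxcut.BoxL)
next
  case (BoxR \<Gamma> A \<Gamma>' \<Delta>')
  then show ?case using g3s_boxcut.BoxR[of \<Gamma> A \<Gamma>' "\<Delta>' + \<Theta>"] by simp
next
  case (BoxCut \<Gamma> \<Delta> A B)
  have 1: "g3s_boxcut \<Gamma> ((\<Delta> + \<Theta>) + {#Box A, Box B#})"
    using BoxCut.IH(1) by (simp add: ac_simps)
  have 2: "g3s_boxcut \<Gamma> ((\<Delta> + \<Theta>) + {#Box (Imp A B), Box B#})"
    using BoxCut.IH(2) by (simp add: ac_simps)
  show ?case using g3s_boxcut.BoxCut[OF 1 2] by simp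
qed


lemma split_box:
  assumes "add_mset x D = D0 + image_mset Box M"
  shows "(\<exists>D1. D0 = add_mset x D1 \<and> D = D1 + image_mset Box M) \<or>
         (\<exists>C M1. x = Box C \<and> M = add_mset C M1 \<and> D = D0 + image_mset Box M1)"
proof (cases "x \<in># D0")
  case True
  then have "D0 = add_mset x (D0 - {#x#})" by simp
  moreover have "D = (D0 - {#x#}) + image_mset Box M"
    using assms True by (metis add_mset_remove_trivial union_mset_add_mset_left insert_DiffM)
  ultimately show ?thesis by blast
next
  case False
  then have "x \<in># image_mset Box M" using assms
    by (metis union_iff union_single_eq_member add_mset_add_single)
  then obtain C where C: "C \<in># M" "x = Box C" by auto
  have "M = add_mset C (M - {#C#})" using C by simp
  moreover have "D = D0 + image_mset Box (M - {#C#})"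
  proof -
    have "add_mset x D = add_mset x (D0 + image_mset Box (M - {#C#}))"
      using assms C by (metis calculation image_mset_add_mset union_mset_add_mset_right)
    then show ?thesis by simp
  qed
  ultimately show ?thesis using C by blast
qed

lemma kax: "g3s_boxcut {#} {#Imp (Box (Imp A B)) (Imp (Box A) (Box B))#}"
proof -
  have a: "g3s_boxcut (add_mset A (add_mset (Box A) (add_mset (Box (Imp A B)) {#}))) {#A, B#}"
    using g3_id[of A "add_mset (Box A) (add_mset (Box (Imp A B)) {#})" "{#B#}"] by simp
  have b: "g3s_boxcut (add_mset B (add_mset A (add_mset (Box A) (add_mset (Box (Imp A B)) {#})))) {#B#}"
    using g3_id[of B "add_mset A (add_mset (Box A) (add_mset (Box (Imp A B)) {#}))" "{#}"] by simp
  have "g3s_boxcut (add_mset (Imp A B) (add_mset A (add_mset (Box A) (add_mset (Box (Imp A B)) {#})))) {#B#}"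
    by (rule g3s_boxcut.ImpL) (use a b in \<open>simp_all add: add_mset_commute\<close>)
  then have "g3s_boxcut (add_mset (Imp A B) (add_mset (Box (Imp A B)) (add_mset A (add_mset (Box A) {#})))) {#B#}"
    by (simp add: add_mset_commute)
  then have "g3s_boxcut (add_mset (Box (Imp A B)) (add_mset A (add_mset (Box A) {#}))) {#B#}"
    by (rule g3s_boxcut.BoxL)
  then have "g3s_boxcut (add_mset A (add_mset (Box A) (add_mset (Box (Imp A B)) {#}))) {#B#}"
    by (simp add: add_mset_commute)
  then have "g3s_boxcut (add_mset (Box A) (add_mset (Box (Imp A B)) {#})) {#B#}"
    by (rule g3s_boxcut.BoxL)
  then have "g3s_boxcut (image_mset Box {#A, Imp A B#}) {#B#}" by (simp add: add_mset_commute)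
  then have "g3s_boxcut ({#} + image_mset Box {#A, Imp A B#}) (add_mset (Box B) {#})"
    by (rule g3s_boxcut.BoxR)
  then have "g3s_boxcut (add_mset (Box A) {#Box (Imp A B)#}) {#Box B#}" by simp
  then have "g3s_boxcut {#Box (Imp A B)#} {#Imp (Box A) (Box B)#}"
    using g3s_boxcut.ImpR[of "Box A" "{#Box (Imp A B)#}" "Box B" "{#}"] by simp
  then show ?thesis
    using g3s_boxcut.ImpR[of "Box (Imp A B)" "{#}" "Imp (Box A) (Box B)" "{#}"] by simp
qed

lemma boxed_weak: "g3s_boxcut {#} {#F#} \<Longrightarrow> g3s_boxcut \<Gamma> (add_mset (Box F) \<Delta>)"
  using g3s_boxcut.BoxR[of "{#}" F \<Gamma> \<Delta>] by simp

lemma comb: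
  assumes h1: "g3s_boxcut \<Gamma> (D + {#Box (Box A), Box (Box B)#})"
    and h2: "g3s_boxcut \<Gamma> (D + {#Box (Box (Imp A B)), Box (Box B)#})"
  shows "g3s_boxcut \<Gamma> (add_mset (Box (Box B)) D)"
proof -
  let ?E = "add_mset (Box (Box B)) D"
  have p1: "g3s_boxcut \<Gamma> (?E + {#Box (Box (Imp A B)), Box (Imp (Box A) (Box B))#})"
    using wkR[OF h2, of "{#Box (Imp (Box A) (Box B))#}"] by (simp add: add_mset_commute)
  have p2: "g3s_boxcut \<Gamma> (?E + {#Box (Imp (Box (Imp A B)) (Imp (Box A) (Box B))), Box (Imp (Box A) (Box B))#})"
    using boxed_weak[OF kax, where \<Gamma>=\<Gamma> and \<Delta>="add_mset (Box (Imp (Box A) (Box B))) ?E"] by simp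
  have "g3s_boxcut \<Gamma> (add_mset (Box (Imp (Box A) (Box B))) ?E)"
    by (rule g3s_boxcut.BoxCut[OF p1 p2])
  then have q: "g3s_boxcut \<Gamma> (D + {#Box (Imp (Box A) (Box B)), Box (Box B)#})"
    by (simp add: add_mset_commute)
  show ?thesis by (rule g3s_boxcut.BoxCut[OF h1 q])
qed

lemma box4:
  "g3s_boxcut \<Gamma> \<Delta> \<Longrightarrow> \<Delta> = \<Delta>0 + image_mset Box M \<Longrightarrow>
   g3s_boxcut \<Gamma> (\<Delta>0 + image_mset (\<lambda>x. Box (Box x)) M)"
proof (induction arbitrary: \<Delta>0 M rule: g3s_boxcut.induct)
  case (Ax P \<Gamma> \<Delta>)
  from split_box[OF Ax] obtain D1 where "\<Delta>0 = add_mset (Atom P) D1" by auto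
  then show ?case by (simp add: g3s_boxcut.Ax)
next
  case (BotL \<Gamma> \<Delta>)
  then show ?case by (simp add: g3s_boxcut.BotL)
next
  case (ImpL \<Gamma> A \<Delta> B)
  have 1: "g3s_boxcut \<Gamma> (add_mset A \<Delta>0 + image_mset (\<lambda>x. Box (Box x)) M)"
    using ImpL.IH(1)[of "add_mset A \<Delta>0" M] ImpL.prems by simp
  have 2: "g3s_boxcut (add_mset B \<Gamma>) (\<Delta>0 + image_mset (\<lambda>x. Box (Box x)) M)"
    using ImpL.IH(2)[of "\<Delta>0" M] ImpL.prems by simp
  show ?case using g3s_boxcut.ImpL[of \<Gamma> A "\<Delta>0 + image_mset (\<lambda>x. Box (Box x)) M" B] 1 2 by simp
next
  case (ImpR A \<Gamma> B \<Delta>)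
  from split_box[OF ImpR.prems] obtain D1 where D1: "\<Delta>0 = add_mset (Imp A B) D1" "\<Delta> = D1 + image_mset Box M"
    by auto
  have "g3s_boxcut (add_mset A \<Gamma>) (add_mset B D1 + image_mset (\<lambda>x. Box (Box x)) M)"
    using ImpR.IH[of "add_mset B D1" M] D1 by simp
  then show ?case using g3s_boxcut.ImpR[of A \<Gamma> B "D1 + image_mset (\<lambda>x. Box (Box x)) M"] D1 by simp
next
  case (BoxL A \<Gamma> \<Delta>)
  then show ?case by (simp add: g3s_boxcut.BoxL)
next
  case (BoxR \<Gamma> A \<Gamma>' \<Delta>')
  from split_box[OF BoxR.prems] show ?case
  proof
    assume "\<exists>D1. \<Delta>0 = add_mset (Box A) D1 \<and> \<Delta>' = D1 + image_mset Box M"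
    then obtain D1 where D1: "\<Delta>0 = add_mset (Box A) D1" by blast
    show ?thesis using g3s_boxcut.BoxR[OF BoxR.hyps, of \<Gamma>' "D1 + image_mset (\<lambda>x. Box (Box x)) M"] D1
      by simp
  next
    assume "\<exists>C M1. Box A = Box C \<and> M = add_mset C M1 \<and> \<Delta>' = \<Delta>0 + image_mset Box M1"
    then obtain M1 where M1: "M = add_mset A M1" by blast
    have "g3s_boxcut ({#} + image_mset Box \<Gamma>) (add_mset (Box A) {#})"
      by (rule g3s_boxcut.BoxR[OF BoxR.hyps])
    then have "g3s_boxcut (image_mset Box \<Gamma>) {#Box A#}" by simp
    then show ?thesis
      using g3s_boxcut.BoxR[of \<Gamma> "Box A" \<Gamma>' "\<Delta>0 + image_mset (\<lambda>x. Box (Box x)) M1"] M1 by simp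
  qed
next
  case (BoxCut \<Gamma> \<Delta> A B)
  from split_box[OF BoxCut.prems] show ?case
  proof
    assume "\<exists>D1. \<Delta>0 = add_mset (Box B) D1 \<and> \<Delta> = D1 + image_mset Box M"
    then obtain D1 where D1: "\<Delta>0 = add_mset (Box B) D1" "\<Delta> = D1 + image_mset Box M" by blast
    have 1: "g3s_boxcut \<Gamma> ((D1 + image_mset (\<lambda>x. Box (Box x)) M) + {#Box A, Box B#})"
      using BoxCut.IH(1)[of "D1 + {#Box A, Box B#}" M] D1 by (simp add: ac_simps)
    have 2: "g3s_boxcut \<Gamma> ((D1 + image_mset (\<lambda>x. Box (Box x)) M) + {#Box (Imp A B), Box B#})"
      using BoxCut.IH(2)[of "D1 + {#Box (Imp A B), Box B#}" M] D1 by (simp add: ac_simps)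
    show ?thesis using g3s_boxcut.BoxCut[OF 1 2] D1 by simp
  next
    assume "\<exists>C M1. Box B = Box C \<and> M = add_mset C M1 \<and> \<Delta> = \<Delta>0 + image_mset Box M1"
    then obtain M1 where M1: "M = add_mset B M1" "\<Delta> = \<Delta>0 + image_mset Box M1" by blast
    let ?D = "\<Delta>0 + image_mset (\<lambda>x. Box (Box x)) M1"
    have 1: "g3s_boxcut \<Gamma> (?D + {#Box (Box A), Box (Box B)#})"
      using BoxCut.IH(1)[of "\<Delta>0" "M1 + {#A, B#}"] M1 by (simp add: ac_simps)
    have 2: "g3s_boxcut \<Gamma> (?D + {#Box (Box (Imp A B)), Box (Box B)#})"
      using BoxCut.IH(2)[of "\<Delta>0" "M1 + {#Imp A B, B#}"] M1 by (simp add: ac_simps)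
    show ?thesis using comb[OF 1 2] M1 by simp
  qed
qed


lemma trivbox: "g3s_boxcut \<Gamma> (add_mset (Box (Imp A A)) \<Delta>)"
proof -
  have "g3s_boxcut (add_mset A {#}) (add_mset A {#})" by (rule g3_id)
  then have "g3s_boxcut {#} {#Imp A A#}" using g3s_boxcut.ImpR[of A "{#}" A "{#}"] by simp
  then show ?thesis by (rule boxed_weak)
qed

theorem mainTheorem2:
  fixes prems :: "('p, 'c, 'v) lfm seq list" and concl :: "('p, 'c, 'v) lfm seq"
  assumes "g3lp_rule prems concl"
    and "\<forall>S \<in> set prems. g3s_derivable (forget_seq S)"
  shows "g3s_derivable (forget_seq concl)"
  using assms
proof (cases rule: g3lp_rule.cases)
  case (Ax P \<Gamma> \<Delta>)
  then show ?thesis by (simp add: g3s_derivable_def forget_seq_def g3s_boxcut.Ax)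
next
  case (BotL \<Gamma> \<Delta>)
  then show ?thesis by (simp add: g3s_derivable_def forget_seq_def g3s_boxcut.BotL)
next
  case (ImpL \<Gamma> A \<Delta> B)
  then show ?thesis using assms(2) by (simp add: g3s_derivable_def forget_seq_def g3s_boxcut.ImpL)
next
  case (ImpR A \<Gamma> B \<Delta>)
  then show ?thesis using assms(2) by (simp add: g3s_derivable_def forget_seq_def g3s_boxcut.ImpR)
next
  case (JustR_c A \<Gamma> c \<Delta>)
  then have "g3s_boxcut {#} {#forget A#}" using assms(2) by (simp add: g3s_derivable_def forget_seq_def)
  then show ?thesis using JustR_c by (simp add: g3s_derivable_def forget_seq_def boxed_weak)
next
  case (JustR_t t A \<Gamma> \<Delta>)
  then have "g3s_boxcut (image_mset Box {#forget A#}) {#forget A#}"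
    using assms(2) by (simp add: g3s_derivable_def forget_seq_def)
  from g3s_boxcut.BoxR[OF this, of "image_mset forget \<Gamma>" "image_mset forget \<Delta>"]
  show ?thesis using JustR_t by (simp add: g3s_derivable_def forget_seq_def)
next
  case (JustL A t \<Gamma> \<Delta>)
  then show ?thesis using assms(2) by (simp add: g3s_derivable_def forget_seq_def g3s_boxcut.BoxL)
next
  case (BangR \<Gamma> \<Delta> t A)
  let ?G = "image_mset forget \<Gamma>" and ?D = "image_mset forget \<Delta>" and ?A = "forget A"
  have "g3s_boxcut ?G (?D + {#Box (Box ?A)#} + image_mset Box {#?A#})"
    using BangR assms(2) by (simp add: g3s_derivable_def forget_seq_def add_mset_commute)
  from box4[OF this refl] have 1: "g3s_boxcut ?G (?D + {#Box (Box ?A), Box (Box ?A)#})" by simp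
  have 2: "g3s_boxcut ?G (?D + {#Box (Imp (Box ?A) (Box ?A)), Box (Box ?A)#})"
    using trivbox[of ?G "Box ?A" "add_mset (Box (Box ?A)) ?D"] by (simp add: add_mset_commute)
  from g3s_boxcut.BoxCut[OF 1 2] show ?thesis using BangR by (simp add: g3s_derivable_def forget_seq_def)
next
  case (PlusR \<Gamma> \<Delta> s A t)
  let ?G = "image_mset forget \<Gamma>" and ?D = "image_mset forget \<Delta>" and ?A = "forget A"
  have 1: "g3s_boxcut ?G ((add_mset (Box ?A) ?D) + {#Box ?A, Box ?A#})"
    using PlusR assms(2) by (simp add: g3s_derivable_def forget_seq_def)
  have 2: "g3s_boxcut ?G ((add_mset (Box ?A) ?D) + {#Box (Imp ?A ?A), Box ?A#})"
    using trivbox[of ?G ?A "add_mset (Box ?A) (add_mset (Box ?A) ?D)"] by (simp add: add_mset_commute)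
  have 3: "g3s_boxcut ?G (?D + {#Box ?A, Box ?A#})"
    using g3s_boxcut.BoxCut[OF 1 2] by (simp add: add_mset_commute)
  have 4: "g3s_boxcut ?G (?D + {#Box (Imp ?A ?A), Box ?A#})"
    using trivbox[of ?G ?A "add_mset (Box ?A) ?D"] by (simp add: add_mset_commute)
  from g3s_boxcut.BoxCut[OF 3 4] show ?thesis using PlusR by (simp add: g3s_derivable_def forget_seq_def)
next
  case (AppR \<Gamma> \<Delta> s A B t)
  let ?G = "image_mset forget \<Gamma>" and ?D = "image_mset forget \<Delta>"
  have 1: "g3s_boxcut ?G (?D + {#Box (forget A), Box (forget B)#})"
    using AppR assms(2) by (simp add: g3s_derivable_def forget_seq_def)
  have 2: "g3s_boxcut ?G (?D + {#Box (Imp (forget A) (forget B)), Box (forget B)#})"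
    using AppR assms(2) by (simp add: g3s_derivable_def forget_seq_def)
  from g3s_boxcut.BoxCut[OF 1 2] show ?thesis using AppR by (simp add: g3s_derivable_def forget_seq_def)
qed

end
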